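(* Let $p$ be a prime number and let $A=\{1,p,p^2,p^3,\dots\}$. For every positive integer $n$, $$N^p_A(n)=\sum_{k=0}^{n-1}p_A(k)\big(\vartheta_p(n-k)+1\big).$$
   Context: For a set $A$ of positive integers, $N^p_A(n)$ is the total number of parts, summed over all partitions of $n$ with all parts in $A$, and $p_A(n)$ is the number of partitions of $n$ with parts in $A$, with $p_A(0)=1$. $\vartheta_p(m)$ is the $p$-adic valuation of $m$, i.e. the exponent of $p$ in $m$. *)

theory Defs
  imports "HOL-Library.Multiset" "HOL-Computational_Algebra.Primes"
begin

definition partitions_in :: "nat set \<Rightarrow> nat \<Rightarrow> nat multiset set" where
  "partitions_in A n = {M. set_mset M \<subseteq> A \<and> sum_mset M = n}"

definition p_A :: "nat set \<Rightarrow> nat \<Rightarrow> nat" where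
  "p_A A n = card (partitions_in A n)"

definition N_A :: "nat set \<Rightarrow> nat \<Rightarrow> nat" where
  "N_A A n = (\<Sum>M\<in>partitions_in A n. size M)"

end

theory Submission
  imports Defs
begin

lemma size_as_sum: "size M = (\<Sum>a\<in>set_mset M. count M a)"
  by (simp add: size_multiset_overloaded_eq)

lemma mem_le_sum: "(x::nat) \<in># M \<Longrightarrow> x \<le> sum_mset M"
proof -
  assume a: "x \<in># M"
  have "sum_mset M = sum_mset (add_mset x (M - {#x#}))" using a by (simp only: insert_DiffM)
  also have "\<dots> = x + sum_mset (M - {#x#})" by simp
  finally show ?thesis by simp
qed

lemma finite_partitions:
  assumes "0 \<notin> A"
  shows "finite (partitions_in A n)"
proof -
  have sub: "partitions_in A n \<subseteq> mset ` {xs. set xs \<subseteq> {1..n} \<and> length xs \<le> n}"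
  proof
    fix M assume M: "M \<in> partitions_in A n"
    hence MA: "set_mset M \<subseteq> A" and Ms: "sum_mset M = n" by (auto simp: partitions_in_def)
    obtain xs where xs: "M = mset xs" by (metis ex_mset)
    have le: "\<forall>x\<in>set_mset M. x \<le> n"
      using Ms mem_le_sum by metis
    have ge: "\<forall>x\<in>set_mset M. 1 \<le> x"
    proof
      fix x assume "x \<in># M"
      hence "x \<in> A" using MA by (rule subsetD[rotated])
      hence "x \<noteq> 0" using assms by (metis)
      thus "1 \<le> x" by simp
    qed
    have "size M = (\<Sum>a\<in>#M. 1)" by (rule size_eq_sum_mset)
    also have "\<dots> \<le> sum_mset M"
      using sum_mset_mono[of M "\<lambda>_. 1" "\<lambda>x. x"] ge by simp
    finally have sz: "size M \<le> n" using Ms by simp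
    have "set xs \<subseteq> {1..n}" using le ge xs by auto
    moreover have "length xs \<le> n" using sz xs by simp
    ultimately show "M \<in> mset ` {xs. set xs \<subseteq> {1..n} \<and> length xs \<le> n}"
      using xs by blast
  qed
  have "finite {xs. set xs \<subseteq> {1..n} \<and> length xs \<le> n}"
    by (intro finite_lists_length_le) simp
  thus ?thesis by (rule finite_subset[OF sub finite_imageI])
qed

lemma general:
  assumes A0: "0 \<notin> A" and n0: "n > 0"
    and fin: "\<And>m. m > 0 \<Longrightarrow> finite {a\<in>A. a dvd m}"
  shows "N_A A n = (\<Sum>k = 0..n-1. p_A A k * card {a\<in>A. a dvd (n - k)})"
proof -
  define P where "P = partitions_in A"
  define T where "T = Sigma (P n) (\<lambda>M. Sigma (set_mset M) (\<lambda>a. {1..count M a}))"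
  define U where "U = Sigma {0..n-1} (\<lambda>k. P k \<times> {a\<in>A. a dvd (n - k)})"
  have finP: "\<And>k. finite (P k)" unfolding P_def using finite_partitions[OF A0] .
  have "card T = (\<Sum>M\<in>P n. card (Sigma (set_mset M) (\<lambda>a. {1..count M a})))"
    unfolding T_def by (rule card_SigmaI) (auto simp: finP)
  also have "\<dots> = (\<Sum>M\<in>P n. size M)"
    by (intro sum.cong refl) (simp add: card_SigmaI size_as_sum)
  finally have cT: "card T = N_A A n" unfolding N_A_def P_def .
  have "card U = (\<Sum>k = 0..n-1. card (P k \<times> {a\<in>A. a dvd (n - k)}))"
    unfolding U_def
  proof (intro card_SigmaI ballI)
    fix k assume "k \<in> {0..n-1}"
    hence "n - k > 0" using n0 by auto
    thus "finite (P k \<times> {a\<in>A. a dvd (n - k)})" using finP fin by blast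
  qed simp
  also have "\<dots> = (\<Sum>k = 0..n-1. p_A A k * card {a\<in>A. a dvd (n - k)})"
    by (simp add: card_cartesian_product p_A_def P_def)
  finally have cU: "card U = \<dots>" .
  define f where "f = (\<lambda>(M::nat multiset, a::nat, j::nat). (n - j * a, M - replicate_mset j a, a))"
  define g where "g = (\<lambda>(k::nat, M::nat multiset, a::nat).
       (M + replicate_mset ((n - k) div a) a, a, (n - k) div a))"
  have "bij_betw f T U"
  proof (rule bij_betw_byWitness[where f' = g])
    show "\<forall>x\<in>T. g (f x) = x"
    proof
      fix x assume "x \<in> T"
      then obtain M a j where x: "x = (M, a, j)" and M: "M \<in> P n" and a: "a \<in># M"
        and j: "1 \<le> j" "j \<le> count M a" unfolding T_def by auto
      have aA: "a \<in> A" using a M unfolding P_def partitions_in_def by auto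
      have "a \<noteq> 0" using aA A0 by metis
      hence apos: "a > 0" by simp
      have sub: "replicate_mset j a \<subseteq># M" using j by (simp add: count_le_replicate_mset_subset_eq)
      have "sum_mset (replicate_mset j a) \<le> sum_mset M"
      proof -
        obtain C where "M = replicate_mset j a + C" using sub by (metis subset_mset.le_iff_add)
        thus ?thesis by simp
      qed
      hence le: "j * a \<le> n" using M by (simp add: P_def partitions_in_def)
      have "(n - (n - j * a)) div a = j" using le apos by simp
      thus "g (f x) = x" using sub by (simp add: x f_def g_def subset_mset.diff_add)
    qed
    show "\<forall>x\<in>U. f (g x) = x"
    proof
      fix x assume "x \<in> U"
      then obtain k M a where x: "x = (k, M, a)" and k: "k \<le> n - 1" and a: "a \<in> A" "a dvd (n - k)"
        unfolding U_def by auto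
      have "(n - k) div a * a = n - k" using a by simp
      hence "n - (n - k) div a * a = k" using k n0 by simp
      thus "f (g x) = x" by (simp add: x f_def g_def)
    qed
    show "f ` T \<subseteq> U"
    proof
      fix y assume "y \<in> f ` T"
      then obtain M a j where y: "y = f (M, a, j)" and M: "M \<in> P n" and a: "a \<in># M"
        and j: "1 \<le> j" "j \<le> count M a" unfolding T_def by auto
      have aA: "a \<in> A" using a M unfolding P_def partitions_in_def by auto
      have "a \<noteq> 0" using aA A0 by metis
      hence apos: "a > 0" by simp
      have sub: "replicate_mset j a \<subseteq># M" using j by (simp add: count_le_replicate_mset_subset_eq)
      have eq: "M = (M - replicate_mset j a) + replicate_mset j a" using sub by (simp add: subset_mset.diff_add)
      have sM: "sum_mset M = n" using M by (simp add: P_def partitions_in_def)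
      have "sum_mset M = sum_mset (M - replicate_mset j a) + j * a"
        by (subst eq) (simp add: sum_mset.union)
      hence s: "sum_mset (M - replicate_mset j a) = n - j * a" and le: "j * a \<le> n" using sM by auto
      have "j * a \<ge> 1" using j apos by simp
      hence k: "n - j * a \<le> n - 1" by (rule diff_le_mono2)
      have "set_mset (M - replicate_mset j a) \<subseteq> A"
      proof -
        have "set_mset (M - replicate_mset j a) \<subseteq> set_mset M" by (auto dest: in_diffD)
        moreover have "set_mset M \<subseteq> A" using M unfolding P_def partitions_in_def by simp
        ultimately show ?thesis by (rule subset_trans)
      qed
      hence "M - replicate_mset j a \<in> P (n - j * a)" using s by (simp add: P_def partitions_in_def)
      moreover have "a dvd (n - (n - j * a))" using le by simp
      ultimately show "y \<in> U" using k aA by (simp add: y f_def U_def)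
    qed
    show "g ` U \<subseteq> T"
    proof
      fix y assume "y \<in> g ` U"
      then obtain k M a where y: "y = g (k, M, a)" and k: "k \<le> n - 1" and MP: "M \<in> P k"
        and a: "a \<in> A" "a dvd (n - k)" unfolding U_def by auto
      define j where "j = (n - k) div a"
      have "a \<noteq> 0" using a A0 by metis
      hence apos: "a > 0" by simp
      have ja: "j * a = n - k" using a by (simp add: j_def)
      have "n - k > 0" using k n0 by linarith
      hence "j \<noteq> 0" using ja by (metis mult_0 less_irrefl)
      hence j1: "j \<ge> 1" by simp
      have "M + replicate_mset j a \<in> P n"
        using MP a ja k n0 by (auto simp: P_def partitions_in_def)
      moreover have "a \<in># M + replicate_mset j a" using j1 by simp
      moreover have "j \<le> count (M + replicate_mset j a) a" by simp
      ultimately show "y \<in> T" using j1 by (simp add: y g_def T_def j_def)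
    qed
  qed
  hence "card T = card U" by (rule bij_betw_same_card)
  thus ?thesis using cT cU by simp
qed

theorem corollary3:
  fixes p n :: nat
  assumes "prime p" and "n > 0"
  shows "N_A (range (\<lambda>i. p ^ i)) n
         = (\<Sum>k = 0..n-1. p_A (range (\<lambda>i. p ^ i)) k * (multiplicity p (n - k) + 1))"
proof -
  have p1: "p > 1" using assms(1) prime_gt_1_nat by blast
  have key: "{a \<in> range (\<lambda>i. p ^ i). a dvd m} = (\<lambda>i. p ^ i) ` {0..multiplicity p m}" if "m > 0" for m
  proof -
    have nu: "\<not> is_unit p" using p1 by simp
    have iff: "p ^ i dvd m \<longleftrightarrow> i \<le> multiplicity p m" for i
      using power_dvd_iff_le_multiplicity[of m p i] nu that by simp
    show ?thesis
    proof (intro set_eqI iffI)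
      fix x assume "x \<in> {a \<in> range (\<lambda>i. p ^ i). a dvd m}"
      then obtain i where "x = p ^ i" "p ^ i dvd m" by blast
      thus "x \<in> (\<lambda>i. p ^ i) ` {0..multiplicity p m}" using iff by auto
    next
      fix x assume "x \<in> (\<lambda>i. p ^ i) ` {0..multiplicity p m}"
      then obtain i where "x = p ^ i" "i \<le> multiplicity p m" by auto
      thus "x \<in> {a \<in> range (\<lambda>i. p ^ i). a dvd m}" using iff by blast
    qed
  qed
  have cardk: "card {a \<in> range (\<lambda>i. p ^ i). a dvd m} = multiplicity p m + 1" if "m > 0" for m
  proof -
    have "inj_on (\<lambda>i. p ^ i) {0..multiplicity p m}"
      using p1 by (intro inj_onI) (simp add: power_inject_exp)
    thus ?thesis using key[OF that] by (simp add: card_image)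
  qed
  have "N_A (range (\<lambda>i. p ^ i)) n
      = (\<Sum>k = 0..n-1. p_A (range (\<lambda>i. p ^ i)) k * card {a \<in> range (\<lambda>i. p ^ i). a dvd (n - k)})"
    using p1 assms(2) by (intro general) (auto simp: key)
  also have "\<dots> = (\<Sum>k = 0..n-1. p_A (range (\<lambda>i. p ^ i)) k * (multiplicity p (n - k) + 1))"
    using assms(2) by (intro sum.cong refl) (simp add: cardk)
  finally show ?thesis .
qed

end
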